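(* Let $K/F$ be any quadratic field extension (of any characteristic, separable or not). An element $n\in F$ is a norm from $K$ (i.e. $n=\mathrm{N}_{K/F}(\alpha)$ for some $\alpha\in K$) if and only if $n=-\det[X,Y]$ for some $X,Y\in\mathbb{M}_2(F)$ such that $K$ is the splitting field over $F$ of the characteristic polynomial of $X$.
   Context: $[X,Y]=XY-YX$. *)

theory Defs
  imports "HOL-Algebra.Algebra"
begin

section \<open>2x2 matrices over a ring (entries (a,b,c,d) stand for [[a,b],[c,d]])\<close>

type_synonym 'a mat2 = "'a \<times> 'a \<times> 'a \<times> 'a"

definition mat2_carrier :: "'a set \<Rightarrow> 'a mat2 set" where
  "mat2_carrier S = {(a,b,c,d). a \<in> S \<and> b \<in> S \<and> c \<in> S \<and> d \<in> S}"

definition mat2_mult :: "('a, 'b) ring_scheme \<Rightarrow> 'a mat2 \<Rightarrow> 'a mat2 \<Rightarrow> 'a mat2" where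
  "mat2_mult R M N = (case M of (a,b,c,d) \<Rightarrow> case N of (e,f,g,h) \<Rightarrow>
     ((a \<otimes>\<^bsub>R\<^esub> e) \<oplus>\<^bsub>R\<^esub> (b \<otimes>\<^bsub>R\<^esub> g), (a \<otimes>\<^bsub>R\<^esub> f) \<oplus>\<^bsub>R\<^esub> (b \<otimes>\<^bsub>R\<^esub> h),
      (c \<otimes>\<^bsub>R\<^esub> e) \<oplus>\<^bsub>R\<^esub> (d \<otimes>\<^bsub>R\<^esub> g), (c \<otimes>\<^bsub>R\<^esub> f) \<oplus>\<^bsub>R\<^esub> (d \<otimes>\<^bsub>R\<^esub> h)))"

definition mat2_minus :: "('a, 'b) ring_scheme \<Rightarrow> 'a mat2 \<Rightarrow> 'a mat2 \<Rightarrow> 'a mat2" where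
  "mat2_minus R M N = (case M of (a,b,c,d) \<Rightarrow> case N of (e,f,g,h) \<Rightarrow>
     (a \<ominus>\<^bsub>R\<^esub> e, b \<ominus>\<^bsub>R\<^esub> f, c \<ominus>\<^bsub>R\<^esub> g, d \<ominus>\<^bsub>R\<^esub> h))"

definition mat2_det :: "('a, 'b) ring_scheme \<Rightarrow> 'a mat2 \<Rightarrow> 'a" where
  "mat2_det R M = (case M of (a,b,c,d) \<Rightarrow> (a \<otimes>\<^bsub>R\<^esub> d) \<ominus>\<^bsub>R\<^esub> (b \<otimes>\<^bsub>R\<^esub> c))"

definition mat2_trace :: "('a, 'b) ring_scheme \<Rightarrow> 'a mat2 \<Rightarrow> 'a" where
  "mat2_trace R M = (case M of (a,b,c,d) \<Rightarrow> a \<oplus>\<^bsub>R\<^esub> d)"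

definition mat2_commutator :: "('a, 'b) ring_scheme \<Rightarrow> 'a mat2 \<Rightarrow> 'a mat2 \<Rightarrow> 'a mat2" where
  "mat2_commutator R M N = mat2_minus R (mat2_mult R M N) (mat2_mult R N M)"

definition quadratic_extension :: "('a, 'b) ring_scheme \<Rightarrow> 'a set \<Rightarrow> bool" where
  "quadratic_extension K F \<longleftrightarrow> field K \<and> subfield F K \<and> ring.dimension K 2 F (carrier K)"

text \<open>Norm N_{K/F}(alpha): determinant of the F-linear map x \<mapsto> alpha x of K,
  computed in an F-basis (u, v) of K (the value is independent of the basis).\<close>
definition is_norm_of :: "('a, 'b) ring_scheme \<Rightarrow> 'a set \<Rightarrow> 'a \<Rightarrow> 'a \<Rightarrow> bool" where
  "is_norm_of K F \<alpha> n \<longleftrightarrow>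
     (\<exists>u v a b c d. u \<in> carrier K \<and> v \<in> carrier K \<and>
        ring.independent K F [u, v] \<and> ring.Span K F [u, v] = carrier K \<and>
        a \<in> F \<and> b \<in> F \<and> c \<in> F \<and> d \<in> F \<and>
        \<alpha> \<otimes>\<^bsub>K\<^esub> u = (a \<otimes>\<^bsub>K\<^esub> u) \<oplus>\<^bsub>K\<^esub> (c \<otimes>\<^bsub>K\<^esub> v) \<and>
        \<alpha> \<otimes>\<^bsub>K\<^esub> v = (b \<otimes>\<^bsub>K\<^esub> u) \<oplus>\<^bsub>K\<^esub> (d \<otimes>\<^bsub>K\<^esub> v) \<and>
        n = (a \<otimes>\<^bsub>K\<^esub> d) \<ominus>\<^bsub>K\<^esub> (b \<otimes>\<^bsub>K\<^esub> c))"

text \<open>K is the splitting field over F of the monic quadratic x^2 - s x + t (s, t in F):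
  the polynomial factors as (x - r1)(x - r2) with r1, r2 in K, and K is generated
  over F by r1, r2.\<close>
definition is_splitting_field_quad :: "('a, 'b) ring_scheme \<Rightarrow> 'a set \<Rightarrow> 'a \<Rightarrow> 'a \<Rightarrow> bool" where
  "is_splitting_field_quad K F s t \<longleftrightarrow>
     (\<exists>r1 \<in> carrier K. \<exists>r2 \<in> carrier K.
        r1 \<oplus>\<^bsub>K\<^esub> r2 = s \<and> r1 \<otimes>\<^bsub>K\<^esub> r2 = t \<and>
        generate_field K (F \<union> {r1, r2}) = carrier K)"

text \<open>The characteristic polynomial of the matrix M is x^2 - tr(M) x + det(M).\<close>
definition splits_char_poly :: "('a, 'b) ring_scheme \<Rightarrow> 'a set \<Rightarrow> 'a mat2 \<Rightarrow> bool" where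
  "splits_char_poly K F M \<longleftrightarrow> is_splitting_field_quad K F (mat2_trace K M) (mat2_det K M)"

end

theory Submission
  imports Defs "HOL-Library.List_Lexorder"
begin

datatype rexp = RV nat | R0 | R1 | RA rexp rexp (infixl "+:" 65) | RM rexp rexp (infixl "*:" 70)
  | RN rexp | RS rexp rexp (infixl "-:" 65)

definition lk :: "('a,'b) ring_scheme \<Rightarrow> 'a list \<Rightarrow> nat \<Rightarrow> 'a" where
  "lk R xs i = (if i < length xs then xs ! i else \<zero>\<^bsub>R\<^esub>)"

lemma lk_Cons0: "lk R (x # xs) 0 = x" by (simp add: lk_def)
lemma lk_ConsS: "lk R (x # xs) (Suc n) = lk R xs n" by (simp add: lk_def)

fun reval :: "('a,'b) ring_scheme \<Rightarrow> 'a list \<Rightarrow> rexp \<Rightarrow> 'a" where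
  "reval R xs (RV i) = lk R xs i"
| "reval R xs R0 = \<zero>\<^bsub>R\<^esub>"
| "reval R xs R1 = \<one>\<^bsub>R\<^esub>"
| "reval R xs (RA a b) = reval R xs a \<oplus>\<^bsub>R\<^esub> reval R xs b"
| "reval R xs (RM a b) = reval R xs a \<otimes>\<^bsub>R\<^esub> reval R xs b"
| "reval R xs (RN a) = \<ominus>\<^bsub>R\<^esub> reval R xs a"
| "reval R xs (RS a b) = reval R xs a \<ominus>\<^bsub>R\<^esub> reval R xs b"

definition tneg :: "(bool \<times> nat list) list \<Rightarrow> (bool \<times> nat list) list" where
  "tneg ts = map (\<lambda>(s,m). (\<not> s, m)) ts"

definition tmul1 :: "bool \<times> nat list \<Rightarrow> (bool \<times> nat list) list \<Rightarrow> (bool \<times> nat list) list" where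
  "tmul1 t ts = map (\<lambda>(s2,m2). (fst t = s2, snd t @ m2)) ts"

fun tmul :: "(bool \<times> nat list) list \<Rightarrow> (bool \<times> nat list) list \<Rightarrow> (bool \<times> nat list) list" where
  "tmul [] ts = []"
| "tmul (t # ts1) ts = tmul1 t ts @ tmul ts1 ts"

fun expand :: "rexp \<Rightarrow> (bool \<times> nat list) list" where
  "expand (RV i) = [(True,[i])]"
| "expand R0 = []"
| "expand R1 = [(True,[])]"
| "expand (RA a b) = expand a @ expand b"
| "expand (RM a b) = tmul (expand a) (expand b)"
| "expand (RN a) = tneg (expand a)"
| "expand (RS a b) = expand a @ tneg (expand b)"

definition pos :: "(bool \<times> nat list) list \<Rightarrow> nat list list" where
  "pos ts = map (sort \<circ> snd) (filter fst ts)"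
definition ngs :: "(bool \<times> nat list) list \<Rightarrow> nat list list" where
  "ngs ts = map (sort \<circ> snd) (filter (Not \<circ> fst) ts)"

definition rcheck :: "rexp \<Rightarrow> rexp \<Rightarrow> bool" where
  "rcheck e1 e2 = (let t1 = expand e1; t2 = expand e2 in
     sort (pos t1 @ ngs t2) = sort (pos t2 @ ngs t1))"

lemma foldr_perm_gen:
  assumes cl: "\<And>x acc. acc \<in> S \<Longrightarrow> F x acc \<in> S"
    and cm: "\<And>x y acc. acc \<in> S \<Longrightarrow> F x (F y acc) = F y (F x acc)"
    and z: "z \<in> S" and m: "mset xs = mset ys"
  shows "foldr F xs z = foldr F ys z"
  using m
proof (induction xs arbitrary: ys)
  case Nil then show ?case by simp
next
  case (Cons x xs)
  have "x \<in> set ys" using Cons.prems by (metis list.set_intros(1) set_mset_mset)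
  then obtain ys1 ys2 where ys: "ys = ys1 @ x # ys2" by (meson split_list)
  have inS: "\<And>l w. w \<in> S \<Longrightarrow> foldr F l w \<in> S"
  proof -
    fix l w assume "w \<in> S" then show "foldr F l w \<in> S" by (induction l) (auto intro: cl)
  qed
  have mv: "\<And>l. foldr F (l @ x # ys2) z = F x (foldr F (l @ ys2) z)"
  proof -
    fix l show "foldr F (l @ x # ys2) z = F x (foldr F (l @ ys2) z)"
      by (induction l) (simp_all, metis cm inS z)
  qed
  have "mset xs = mset (ys1 @ ys2)" using Cons.prems ys by simp
  then have "foldr F xs z = foldr F (ys1 @ ys2) z" using Cons.IH by blast
  then show ?case using mv ys by simp
qed

fun meval :: "('a,'b) ring_scheme \<Rightarrow> 'a list \<Rightarrow> nat list \<Rightarrow> 'a" where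
  "meval R xs [] = \<one>\<^bsub>R\<^esub>"
| "meval R xs (i # m) = lk R xs i \<otimes>\<^bsub>R\<^esub> meval R xs m"

fun msum :: "('a,'b) ring_scheme \<Rightarrow> 'a list \<Rightarrow> nat list list \<Rightarrow> 'a" where
  "msum R xs [] = \<zero>\<^bsub>R\<^esub>"
| "msum R xs (m # ms) = meval R xs m \<oplus>\<^bsub>R\<^esub> msum R xs ms"

fun teval :: "('a,'b) ring_scheme \<Rightarrow> 'a list \<Rightarrow> (bool \<times> nat list) list \<Rightarrow> 'a" where
  "teval R xs [] = \<zero>\<^bsub>R\<^esub>"
| "teval R xs (t # ts) = (if fst t then meval R xs (snd t) else \<ominus>\<^bsub>R\<^esub> meval R xs (snd t)) \<oplus>\<^bsub>R\<^esub> teval R xs ts"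

context cring begin

context fixes xs assumes xs: "set xs \<subseteq> carrier R" begin

lemma lk_carrier [simp]: "lk R xs i \<in> carrier R"
  using xs by (auto simp: lk_def)

lemma meval_carrier [simp]: "meval R xs m \<in> carrier R"
  by (induction m) auto

lemma msum_carrier [simp]: "msum R xs ms \<in> carrier R"
  by (induction ms) auto

lemma teval_carrier [simp]: "teval R xs ts \<in> carrier R"
  by (induction ts) auto

lemma reval_carrier [simp]: "reval R xs e \<in> carrier R"
  by (induction e) auto

lemma teval_append: "teval R xs (ts1 @ ts2) = teval R xs ts1 \<oplus> teval R xs ts2"
  by (induction ts1) (auto simp: a_assoc)

lemma teval_tneg: "teval R xs (tneg ts) = \<ominus> teval R xs ts"
  by (induction ts) (auto simp: tneg_def minus_add)

lemma meval_append: "meval R xs (m1 @ m2) = meval R xs m1 \<otimes> meval R xs m2"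
  by (induction m1) (auto simp: m_assoc)

lemma teval_tmul1: "teval R xs (tmul1 t ts) = (if fst t then meval R xs (snd t) else \<ominus> meval R xs (snd t)) \<otimes> teval R xs ts"
proof (induction ts)
  case Nil then show ?case by (simp add: tmul1_def)
next
  case (Cons a ts)
  then show ?case
    by (cases t; cases a) (auto simp: tmul1_def r_distr meval_append l_minus r_minus)
qed

lemma teval_tmul: "teval R xs (tmul ts1 ts2) = teval R xs ts1 \<otimes> teval R xs ts2"
  by (induction ts1) (auto simp: teval_append teval_tmul1 l_distr)

lemma reval_expand: "reval R xs e = teval R xs (expand e)"
  by (induction e) (auto simp: teval_append teval_tneg teval_tmul minus_eq)

lemma teval_split: "teval R xs ts = msum R xs (map snd (filter fst ts)) \<ominus> msum R xs (map snd (filter (Not \<circ> fst) ts))"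
proof (induction ts)
  case Nil then show ?case by (simp add: minus_eq)
next
  case (Cons t ts)
  show ?case
  proof (cases "fst t")
    case True
    then show ?thesis using Cons
      by (simp add: minus_eq a_assoc)
  next
    case False
    then show ?thesis using Cons
      by (simp add: minus_eq minus_add a_ac)
  qed
qed

lemma meval_foldr: "meval R xs m = foldr (\<lambda>i acc. lk R xs i \<otimes> acc) m \<one>"
  by (induction m) auto

lemma msum_foldr: "msum R xs m = foldr (\<lambda>i acc. meval R xs i \<oplus> acc) m \<zero>"
  by (induction m) auto

lemma meval_perm: "mset m1 = mset m2 \<Longrightarrow> meval R xs m1 = meval R xs m2"
  unfolding meval_foldr
  by (rule foldr_perm_gen[where S="carrier R"]) (auto simp: m_lcomm)

lemma msum_perm: "mset m1 = mset m2 \<Longrightarrow> msum R xs m1 = msum R xs m2"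
  unfolding msum_foldr
  by (rule foldr_perm_gen[where S="carrier R"]) (auto simp: a_lcomm)

lemma msum_sort: "msum R xs (map (sort \<circ> f) l) = msum R xs (map f l)"
  by (induction l) (auto simp: meval_perm[of "sort _" ])

lemma msum_append: "msum R xs (l1 @ l2) = msum R xs l1 \<oplus> msum R xs l2"
  by (induction l1) (auto simp: a_assoc)

lemma reflect:
  assumes "rcheck e1 e2"
  shows "reval R xs e1 = reval R xs e2"
proof -
  define t1 where "t1 = expand e1"
  define t2 where "t2 = expand e2"
  define P1 where "P1 = msum R xs (pos t1)"
  define P2 where "P2 = msum R xs (pos t2)"
  define N1 where "N1 = msum R xs (ngs t1)"
  define N2 where "N2 = msum R xs (ngs t2)"
  have "mset (pos t1 @ ngs t2) = mset (pos t2 @ ngs t1)"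
    using assms unfolding rcheck_def t1_def t2_def Let_def by (metis mset_sort)
  then have "msum R xs (pos t1 @ ngs t2) = msum R xs (pos t2 @ ngs t1)" by (rule msum_perm)
  then have eq: "P1 \<oplus> N2 = P2 \<oplus> N1" by (simp add: msum_append P1_def P2_def N1_def N2_def)
  have e1: "reval R xs e1 = P1 \<ominus> N1"
    unfolding reval_expand teval_split P1_def N1_def pos_def ngs_def t1_def msum_sort by simp
  have e2: "reval R xs e2 = P2 \<ominus> N2"
    unfolding reval_expand teval_split P2_def N2_def pos_def ngs_def t2_def msum_sort by simp
  have c: "P1 \<in> carrier R" "P2 \<in> carrier R" "N1 \<in> carrier R" "N2 \<in> carrier R"
    by (auto simp: P1_def P2_def N1_def N2_def)
  have "(P1 \<oplus> N2) \<ominus> (N1 \<oplus> N2) = (P1 \<ominus> N1) \<oplus> (N2 \<ominus> N2)" using c by (simp add: minus_eq minus_add a_ac)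
  then have "P1 \<ominus> N1 = (P1 \<oplus> N2) \<ominus> (N1 \<oplus> N2)" using c by (simp add: minus_eq r_neg)
  also have "\<dots> = (P2 \<oplus> N1) \<ominus> (N1 \<oplus> N2)" using eq by simp
  also have "\<dots> = (P2 \<ominus> N2) \<oplus> (N1 \<ominus> N1)" using c by (simp add: minus_eq minus_add a_ac)
  also have "\<dots> = P2 \<ominus> N2" using c by (simp add: minus_eq r_neg)
  finally show ?thesis using e1 e2 by simp
qed

end
end

lemma (in cring) idI1:
  assumes "r \<in> carrier R" "a \<in> carrier R" "d \<in> carrier R"
  shows "((r \<ominus> a) \<otimes> (r \<ominus> d)) = (((r \<otimes> r) \<ominus> ((a \<oplus> d) \<otimes> r)) \<oplus> (a \<otimes> d))"
proof -
  have "reval R [r, a, d] (RM (RS (RV 0) (RV (Suc 0))) (RS (RV 0) (RV (Suc (Suc 0))))) = reval R [r, a, d] (RA (RS (RM (RV 0) (RV 0)) (RM (RA (RV (Suc 0)) (RV (Suc (Suc 0)))) (RV 0))) (RM (RV (Suc 0)) (RV (Suc (Suc 0)))))"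
    apply (rule reflect)
    subgoal using assms by auto
    subgoal by code_simp
    done
  then show ?thesis by (simp only: reval.simps lk_Cons0 lk_ConsS)
qed

lemma (in cring) idI2:
  assumes "r \<in> carrier R" "q \<in> carrier R"
  shows "(((r \<otimes> r) \<ominus> ((r \<oplus> q) \<otimes> r)) \<oplus> (r \<otimes> q)) = \<zero>"
proof -
  have "reval R [r, q] (RA (RS (RM (RV 0) (RV 0)) (RM (RA (RV 0) (RV (Suc 0))) (RV 0))) (RM (RV 0) (RV (Suc 0)))) = reval R [r, q] R0"
    apply (rule reflect)
    subgoal using assms by auto
    subgoal by code_simp
    done
  then show ?thesis by (simp only: reval.simps lk_Cons0 lk_ConsS)
qed

lemma (in cring) idI3:
  assumes "r \<in> carrier R" "q \<in> carrier R"
  shows "q = ((r \<oplus> q) \<ominus> r)"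
proof -
  have "reval R [r, q] (RV (Suc 0)) = reval R [r, q] (RS (RA (RV 0) (RV (Suc 0))) (RV 0))"
    apply (rule reflect)
    subgoal using assms by auto
    subgoal by code_simp
    done
  then show ?thesis by (simp only: reval.simps lk_Cons0 lk_ConsS)
qed

lemma (in cring) idI4:
  assumes "l \<in> carrier R" "m \<in> carrier R" "r \<in> carrier R" "s \<in> carrier R" "t \<in> carrier R"
  shows "(((l \<oplus> (m \<otimes> r)) \<otimes> r) \<ominus> (((\<ominus> (m \<otimes> t)) \<otimes> \<one>) \<oplus> ((l \<oplus> (m \<otimes> s)) \<otimes> r))) = (m \<otimes> (((r \<otimes> r) \<ominus> (s \<otimes> r)) \<oplus> t))"
proof -
  have "reval R [l, m, r, s, t] (RS (RM (RA (RV 0) (RM (RV (Suc 0)) (RV (Suc (Suc 0))))) (RV (Suc (Suc 0)))) (RA (RM (RN (RM (RV (Suc 0)) (RV (Suc (Suc (Suc (Suc 0))))))) R1) (RM (RA (RV 0) (RM (RV (Suc 0)) (RV (Suc (Suc (Suc 0)))))) (RV (Suc (Suc 0)))))) = reval R [l, m, r, s, t] (RM (RV (Suc 0)) (RA (RS (RM (RV (Suc (Suc 0))) (RV (Suc (Suc 0)))) (RM (RV (Suc (Suc (Suc 0)))) (RV (Suc (Suc 0))))) (RV (Suc (Suc (Suc (Suc 0)))))))"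
    apply (rule reflect)
    subgoal using assms by auto
    subgoal by code_simp
    done
  then show ?thesis by (simp only: reval.simps lk_Cons0 lk_ConsS)
qed

lemma (in cring) idI5:
  assumes "l \<in> carrier R" "m \<in> carrier R" "c \<in> carrier R" "s \<in> carrier R" "t \<in> carrier R"
  shows "(((l \<otimes> (l \<oplus> (m \<otimes> s))) \<ominus> ((\<ominus> (m \<otimes> t)) \<otimes> m)) \<otimes> (c \<otimes> c)) = (((l \<otimes> c) \<otimes> ((l \<otimes> c) \<oplus> ((m \<otimes> c) \<otimes> s))) \<oplus> (((m \<otimes> c) \<otimes> (m \<otimes> c)) \<otimes> t))"
proof -
  have "reval R [l, m, c, s, t] (RM (RS (RM (RV 0) (RA (RV 0) (RM (RV (Suc 0)) (RV (Suc (Suc (Suc 0))))))) (RM (RN (RM (RV (Suc 0)) (RV (Suc (Suc (Suc (Suc 0))))))) (RV (Suc 0)))) (RM (RV (Suc (Suc 0))) (RV (Suc (Suc 0))))) = reval R [l, m, c, s, t] (RA (RM (RM (RV 0) (RV (Suc (Suc 0)))) (RA (RM (RV 0) (RV (Suc (Suc 0)))) (RM (RM (RV (Suc 0)) (RV (Suc (Suc 0)))) (RV (Suc (Suc (Suc 0))))))) (RM (RM (RM (RV (Suc 0)) (RV (Suc (Suc 0)))) (RM (RV (Suc 0)) (RV (Suc (Suc 0))))) (RV (Suc (Suc (Suc (Suc 0)))))))"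
    apply (rule reflect)
    subgoal using assms by auto
    subgoal by code_simp
    done
  then show ?thesis by (simp only: reval.simps lk_Cons0 lk_ConsS)
qed

lemma (in cring) idI6:
  assumes "p \<in> carrier R" "m \<in> carrier R" "c \<in> carrier R" "d \<in> carrier R"
  shows "(((\<ominus> p) \<ominus> (m \<otimes> d)) \<otimes> c) = ((\<ominus> (p \<otimes> c)) \<ominus> ((m \<otimes> c) \<otimes> d))"
proof -
  have "reval R [p, m, c, d] (RM (RS (RN (RV 0)) (RM (RV (Suc 0)) (RV (Suc (Suc (Suc 0)))))) (RV (Suc (Suc 0)))) = reval R [p, m, c, d] (RS (RN (RM (RV 0) (RV (Suc (Suc 0))))) (RM (RM (RV (Suc 0)) (RV (Suc (Suc 0)))) (RV (Suc (Suc (Suc 0))))))"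
    apply (rule reflect)
    subgoal using assms by auto
    subgoal by code_simp
    done
  then show ?thesis by (simp only: reval.simps lk_Cons0 lk_ConsS)
qed

lemma (in cring) idI7:
  assumes "a \<in> carrier R" "b \<in> carrier R" "c \<in> carrier R" "d \<in> carrier R" "e \<in> carrier R" "f \<in> carrier R" "g \<in> carrier R" "h \<in> carrier R"
  shows "((((\<ominus> (((b \<otimes> g) \<ominus> (c \<otimes> f)) \<otimes> c)) \<ominus> (((c \<otimes> (e \<ominus> h)) \<oplus> (g \<otimes> (d \<ominus> a))) \<otimes> d)) \<otimes> (((\<ominus> (((b \<otimes> g) \<ominus> (c \<otimes> f)) \<otimes> c)) \<ominus> (((c \<otimes> (e \<ominus> h)) \<oplus> (g \<otimes> (d \<ominus> a))) \<otimes> d)) \<oplus> (((c \<otimes> (e \<ominus> h)) \<oplus> (g \<otimes> (d \<ominus> a))) \<otimes> (a \<oplus> d)))) \<oplus> ((((c \<otimes> (e \<ominus> h)) \<oplus> (g \<otimes> (d \<ominus> a))) \<otimes> ((c \<otimes> (e \<ominus> h)) \<oplus> (g \<otimes> (d \<ominus> a)))) \<otimes> ((a \<otimes> d) \<ominus> (b \<otimes> c)))) = ((\<ominus> (((((a \<otimes> e) \<oplus> (b \<otimes> g)) \<ominus> ((e \<otimes> a) \<oplus> (f \<otimes> c))) \<otimes> (((c \<otimes> f) \<oplus> (d \<otimes> h)) \<ominus> ((g \<otimes> b) \<oplus> (h \<otimes> d)))) \<ominus> ((((a \<otimes> f) \<oplus> (b \<otimes> h)) \<ominus> ((e \<otimes>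 b) \<oplus> (f \<otimes> d))) \<otimes> (((c \<otimes> e) \<oplus> (d \<otimes> g)) \<ominus> ((g \<otimes> a) \<oplus> (h \<otimes> c)))))) \<otimes> (c \<otimes> c))"
proof -
  have "reval R [a, b, c, d, e, f, g, h] (RA (RM (RS (RN (RM (RS (RM (RV (Suc 0)) (RV (Suc (Suc (Suc (Suc (Suc (Suc 0)))))))) (RM (RV (Suc (Suc 0))) (RV (Suc (Suc (Suc (Suc (Suc 0)))))))) (RV (Suc (Suc 0))))) (RM (RA (RM (RV (Suc (Suc 0))) (RS (RV (Suc (Suc (Suc (Suc 0))))) (RV (Suc (Suc (Suc (Suc (Suc (Suc (Suc 0)))))))))) (RM (RV (Suc (Suc (Suc (Suc (Suc (Suc 0))))))) (RS (RV (Suc (Suc (Suc 0)))) (RV 0)))) (RV (Suc (Suc (Suc 0)))))) (RA (RS (RN (RM (RS (RM (RV (Suc 0)) (RV (Suc (Suc (Suc (Suc (Suc (Suc 0)))))))) (RM (RV (Suc (Suc 0))) (RV (Suc (Suc (Suc (Suc (Suc 0)))))))) (RV (Suc (Suc 0))))) (RM (RA (RM (RV (Suc (Suc 0))) (RS (RV (Suc (Suc (Suc (Suc 0))))) (RV (Suc (Suc (Suc (Suc (Suc (Suc (Suc 0)))))))))) (RM (RV (Suc (Suc (Suc (Suc (Suc (Suc 0))))))) (RS (RV (Suc (Suc (Suc 0)))) (RV 0)))) (RV (Suc (Suc (Suc 0)))))) (RM (RA (RM (RV (Suc (Suc 0))) (RS (RV (Suc (Suc (Suc (Suc 0))))) (RV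 (Suc (Suc (Suc (Suc (Suc (Suc (Suc 0)))))))))) (RM (RV (Suc (Suc (Suc (Suc (Suc (Suc 0))))))) (RS (RV (Suc (Suc (Suc 0)))) (RV 0)))) (RA (RV 0) (RV (Suc (Suc (Suc 0)))))))) (RM (RM (RA (RM (RV (Suc (Suc 0))) (RS (RV (Suc (Suc (Suc (Suc 0))))) (RV (Suc (Suc (Suc (Suc (Suc (Suc (Suc 0)))))))))) (RM (RV (Suc (Suc (Suc (Suc (Suc (Suc 0))))))) (RS (RV (Suc (Suc (Suc 0)))) (RV 0)))) (RA (RM (RV (Suc (Suc 0))) (RS (RV (Suc (Suc (Suc (Suc 0))))) (RV (Suc (Suc (Suc (Suc (Suc (Suc (Suc 0)))))))))) (RM (RV (Suc (Suc (Suc (Suc (Suc (Suc 0))))))) (RS (RV (Suc (Suc (Suc 0)))) (RV 0))))) (RS (RM (RV 0) (RV (Suc (Suc (Suc 0))))) (RM (RV (Suc 0)) (RV (Suc (Suc 0))))))) = reval R [a, b, c, d, e, f, g, h] (RM (RN (RS (RM (RS (RA (RM (RV 0) (RV (Suc (Suc (Suc (Suc 0)))))) (RM (RV (Suc 0)) (RV (Suc (Suc (Suc (Suc (Suc (Suc 0))))))))) (RA (RM (RV (Suc (Suc (Suc (Suc 0))))) (RV 0)) (RM (RV (Suc (Suc (Suc (Suc (Suc 0)))))) (RV (Suc (Suc 0)))))) (RS (RA (RM (RV (Suc (Suc 0))) (RV (Suc (Suc (Suc (Suc (Suc 0))))))) (RM (RV (Suc (Suc (Suc 0)))) (RV (Suc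 (Suc (Suc (Suc (Suc (Suc (Suc 0)))))))))) (RA (RM (RV (Suc (Suc (Suc (Suc (Suc (Suc 0))))))) (RV (Suc 0))) (RM (RV (Suc (Suc (Suc (Suc (Suc (Suc (Suc 0)))))))) (RV (Suc (Suc (Suc 0)))))))) (RM (RS (RA (RM (RV 0) (RV (Suc (Suc (Suc (Suc (Suc 0))))))) (RM (RV (Suc 0)) (RV (Suc (Suc (Suc (Suc (Suc (Suc (Suc 0)))))))))) (RA (RM (RV (Suc (Suc (Suc (Suc 0))))) (RV (Suc 0))) (RM (RV (Suc (Suc (Suc (Suc (Suc 0)))))) (RV (Suc (Suc (Suc 0))))))) (RS (RA (RM (RV (Suc (Suc 0))) (RV (Suc (Suc (Suc (Suc 0)))))) (RM (RV (Suc (Suc (Suc 0)))) (RV (Suc (Suc (Suc (Suc (Suc (Suc 0))))))))) (RA (RM (RV (Suc (Suc (Suc (Suc (Suc (Suc 0))))))) (RV 0)) (RM (RV (Suc (Suc (Suc (Suc (Suc (Suc (Suc 0)))))))) (RV (Suc (Suc 0))))))))) (RM (RV (Suc (Suc 0))) (RV (Suc (Suc 0)))))"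
    apply (rule reflect)
    subgoal using assms by auto
    subgoal by code_simp
    done
  then show ?thesis by (simp only: reval.simps lk_Cons0 lk_ConsS)
qed

lemma (in cring) idI8:
  assumes "x \<in> carrier R" "s \<in> carrier R" "t \<in> carrier R" "u \<in> carrier R"
  shows "((((x \<otimes> x) \<ominus> (s \<otimes> x)) \<oplus> t) \<otimes> u) = (((x \<otimes> (x \<otimes> u)) \<ominus> (s \<otimes> (x \<otimes> u))) \<oplus> (t \<otimes> u))"
proof -
  have "reval R [x, s, t, u] (RM (RA (RS (RM (RV 0) (RV 0)) (RM (RV (Suc 0)) (RV 0))) (RV (Suc (Suc 0)))) (RV (Suc (Suc (Suc 0))))) = reval R [x, s, t, u] (RA (RS (RM (RV 0) (RM (RV 0) (RV (Suc (Suc (Suc 0)))))) (RM (RV (Suc 0)) (RM (RV 0) (RV (Suc (Suc (Suc 0))))))) (RM (RV (Suc (Suc 0))) (RV (Suc (Suc (Suc 0))))))"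
    apply (rule reflect)
    subgoal using assms by auto
    subgoal by code_simp
    done
  then show ?thesis by (simp only: reval.simps lk_Cons0 lk_ConsS)
qed

lemma (in cring) idI9:
  assumes "x \<in> carrier R" "a \<in> carrier R" "c \<in> carrier R" "u \<in> carrier R" "v \<in> carrier R"
  shows "(x \<otimes> ((a \<otimes> u) \<oplus> (c \<otimes> v))) = ((a \<otimes> (x \<otimes> u)) \<oplus> (c \<otimes> (x \<otimes> v)))"
proof -
  have "reval R [x, a, c, u, v] (RM (RV 0) (RA (RM (RV (Suc 0)) (RV (Suc (Suc (Suc 0))))) (RM (RV (Suc (Suc 0))) (RV (Suc (Suc (Suc (Suc 0)))))))) = reval R [x, a, c, u, v] (RA (RM (RV (Suc 0)) (RM (RV 0) (RV (Suc (Suc (Suc 0)))))) (RM (RV (Suc (Suc 0))) (RM (RV 0) (RV (Suc (Suc (Suc (Suc 0))))))))"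
    apply (rule reflect)
    subgoal using assms by auto
    subgoal by code_simp
    done
  then show ?thesis by (simp only: reval.simps lk_Cons0 lk_ConsS)
qed

lemma (in cring) idI10:
  assumes "a \<in> carrier R" "b \<in> carrier R" "c \<in> carrier R" "d \<in> carrier R" "u \<in> carrier R" "v \<in> carrier R"
  shows "((((a \<otimes> ((a \<otimes> u) \<oplus> (c \<otimes> v))) \<oplus> (c \<otimes> ((b \<otimes> u) \<oplus> (d \<otimes> v)))) \<ominus> ((a \<oplus> d) \<otimes> ((a \<otimes> u) \<oplus> (c \<otimes> v)))) \<oplus> (((a \<otimes> d) \<ominus> (b \<otimes> c)) \<otimes> u)) = \<zero>"
proof -
  have "reval R [a, b, c, d, u, v] (RA (RS (RA (RM (RV 0) (RA (RM (RV 0) (RV (Suc (Suc (Suc (Suc 0)))))) (RM (RV (Suc (Suc 0))) (RV (Suc (Suc (Suc (Suc (Suc 0))))))))) (RM (RV (Suc (Suc 0))) (RA (RM (RV (Suc 0)) (RV (Suc (Suc (Suc (Suc 0)))))) (RM (RV (Suc (Suc (Suc 0)))) (RV (Suc (Suc (Suc (Suc (Suc 0)))))))))) (RM (RA (RV 0) (RV (Suc (Suc (Suc 0))))) (RA (RM (RV 0) (RV (Suc (Suc (Suc (Suc 0)))))) (RM (RV (Suc (Suc 0))) (RV (Suc (Suc (Suc (Suc (Suc 0)))))))))) (RM (RS (RM (RV 0) (RV (Suc (Suc (Suc 0))))) (RM (RV (Suc 0)) (RV (Suc (Suc 0))))) (RV (Suc (Suc (Suc (Suc 0))))))) = reval R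 [a, b, c, d, u, v] R0"
    apply (rule reflect)
    subgoal using assms by auto
    subgoal by code_simp
    done
  then show ?thesis by (simp only: reval.simps lk_Cons0 lk_ConsS)
qed

lemma (in cring) idI11:
  assumes "x \<in> carrier R" "s \<in> carrier R" "t \<in> carrier R"
  shows "(x \<otimes> (s \<ominus> x)) = (t \<ominus> (((x \<otimes> x) \<ominus> (s \<otimes> x)) \<oplus> t))"
proof -
  have "reval R [x, s, t] (RM (RV 0) (RS (RV (Suc 0)) (RV 0))) = reval R [x, s, t] (RS (RV (Suc (Suc 0))) (RA (RS (RM (RV 0) (RV 0)) (RM (RV (Suc 0)) (RV 0))) (RV (Suc (Suc 0)))))"
    apply (rule reflect)
    subgoal using assms by auto
    subgoal by code_simp
    done
  then show ?thesis by (simp only: reval.simps lk_Cons0 lk_ConsS)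
qed

lemma (in cring) idI11b:
  assumes "x \<in> carrier R" "s \<in> carrier R"
  shows "(x \<oplus> (s \<ominus> x)) = s"
proof -
  have "reval R [x, s] (RA (RV 0) (RS (RV (Suc 0)) (RV 0))) = reval R [x, s] (RV (Suc 0))"
    apply (rule reflect)
    subgoal using assms by auto
    subgoal by code_simp
    done
  then show ?thesis by (simp only: reval.simps lk_Cons0 lk_ConsS)
qed

lemma (in cring) idI12:
  assumes "a \<in> carrier R" "b \<in> carrier R" "c \<in> carrier R" "d \<in> carrier R" "f \<in> carrier R"
  shows "(\<ominus> (((((a \<otimes> \<one>) \<oplus> (b \<otimes> \<zero>)) \<ominus> ((\<one> \<otimes> a) \<oplus> (f \<otimes> c))) \<otimes> (((c \<otimes> f) \<oplus> (d \<otimes> \<zero>)) \<ominus> ((\<zero> \<otimes> b) \<oplus> (\<zero> \<otimes> d)))) \<ominus> ((((a \<otimes> f) \<oplus> (b \<otimes> \<zero>)) \<ominus> ((\<one> \<otimes> b) \<oplus> (f \<otimes> d))) \<otimes> (((c \<otimes> \<one>) \<oplus> (d \<otimes> \<zero>)) \<ominus> ((\<zero> \<otimes> a) \<oplus> (\<zero> \<otimes> c)))))) = (((a \<otimes> d) \<ominus> (b \<otimes> c)) \<oplus> (((f \<otimes> c) \<ominus> d) \<otimes> ((f \<otimes> c) \<oplus> a)))"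
proof -
  have "reval R [a, b, c, d, f] (RN (RS (RM (RS (RA (RM (RV 0) R1) (RM (RV (Suc 0)) R0)) (RA (RM R1 (RV 0)) (RM (RV (Suc (Suc (Suc (Suc 0))))) (RV (Suc (Suc 0)))))) (RS (RA (RM (RV (Suc (Suc 0))) (RV (Suc (Suc (Suc (Suc 0)))))) (RM (RV (Suc (Suc (Suc 0)))) R0)) (RA (RM R0 (RV (Suc 0))) (RM R0 (RV (Suc (Suc (Suc 0)))))))) (RM (RS (RA (RM (RV 0) (RV (Suc (Suc (Suc (Suc 0)))))) (RM (RV (Suc 0)) R0)) (RA (RM R1 (RV (Suc 0))) (RM (RV (Suc (Suc (Suc (Suc 0))))) (RV (Suc (Suc (Suc 0))))))) (RS (RA (RM (RV (Suc (Suc 0))) R1) (RM (RV (Suc (Suc (Suc 0)))) R0)) (RA (RM R0 (RV 0)) (RM R0 (RV (Suc (Suc 0))))))))) = reval R [a, b, c, d, f] (RA (RS (RM (RV 0) (RV (Suc (Suc (Suc 0))))) (RM (RV (Suc 0)) (RV (Suc (Suc 0))))) (RM (RS (RM (RV (Suc (Suc (Suc (Suc 0))))) (RV (Suc (Suc 0)))) (RV (Suc (Suc (Suc 0))))) (RA (RM (RV (Suc (Suc (Suc (Suc 0))))) (RV (Suc (Suc 0)))) (RV 0))))"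
    apply (rule reflect)
    subgoal using assms by auto
    subgoal by code_simp
    done
  then show ?thesis by (simp only: reval.simps lk_Cons0 lk_ConsS)
qed

lemma (in cring) idI13:
  assumes "b \<in> carrier R" "x \<in> carrier R" "y \<in> carrier R"
  shows "(b \<otimes> (y \<ominus> b)) = ((\<ominus> x) \<ominus> ((b \<otimes> b) \<ominus> (x \<oplus> (y \<otimes> b))))"
proof -
  have "reval R [b, x, y] (RM (RV 0) (RS (RV (Suc (Suc 0))) (RV 0))) = reval R [b, x, y] (RS (RN (RV (Suc 0))) (RS (RM (RV 0) (RV 0)) (RA (RV (Suc 0)) (RM (RV (Suc (Suc 0))) (RV 0)))))"
    apply (rule reflect)
    subgoal using assms by auto
    subgoal by code_simp
    done
  then show ?thesis by (simp only: reval.simps lk_Cons0 lk_ConsS)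
qed

lemma (in cring) idI14:
  assumes "x \<in> carrier R" "y \<in> carrier R" "z \<in> carrier R"
  shows "(\<ominus> (((((\<zero> \<otimes> \<zero>) \<oplus> (x \<otimes> \<zero>)) \<ominus> ((\<zero> \<otimes> \<zero>) \<oplus> (z \<otimes> \<one>))) \<otimes> (((\<one> \<otimes> z) \<oplus> (y \<otimes> \<zero>)) \<ominus> ((\<zero> \<otimes> x) \<oplus> (\<zero> \<otimes> y)))) \<ominus> ((((\<zero> \<otimes> z) \<oplus> (x \<otimes> \<zero>)) \<ominus> ((\<zero> \<otimes> x) \<oplus> (z \<otimes> y))) \<otimes> (((\<one> \<otimes> \<zero>) \<oplus> (y \<otimes> \<zero>)) \<ominus> ((\<zero> \<otimes> \<zero>) \<oplus> (\<zero> \<otimes> \<one>)))))) = (z \<otimes> z)"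
proof -
  have "reval R [x, y, z] (RN (RS (RM (RS (RA (RM R0 R0) (RM (RV 0) R0)) (RA (RM R0 R0) (RM (RV (Suc (Suc 0))) R1))) (RS (RA (RM R1 (RV (Suc (Suc 0)))) (RM (RV (Suc 0)) R0)) (RA (RM R0 (RV 0)) (RM R0 (RV (Suc 0)))))) (RM (RS (RA (RM R0 (RV (Suc (Suc 0)))) (RM (RV 0) R0)) (RA (RM R0 (RV 0)) (RM (RV (Suc (Suc 0))) (RV (Suc 0))))) (RS (RA (RM R1 R0) (RM (RV (Suc 0)) R0)) (RA (RM R0 R0) (RM R0 R1)))))) = reval R [x, y, z] (RM (RV (Suc (Suc 0))) (RV (Suc (Suc 0))))"
    apply (rule reflect)
    subgoal using assms by auto
    subgoal by code_simp
    done
  then show ?thesis by (simp only: reval.simps lk_Cons0 lk_ConsS)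
qed

lemma (in cring) idI15:
  assumes "a \<in> carrier R" "b \<in> carrier R"
  shows "a = ((a \<ominus> b) \<oplus> b)"
proof -
  have "reval R [a, b] (RV 0) = reval R [a, b] (RA (RS (RV 0) (RV (Suc 0))) (RV (Suc 0)))"
    apply (rule reflect)
    subgoal using assms by auto
    subgoal by code_simp
    done
  then show ?thesis by (simp only: reval.simps lk_Cons0 lk_ConsS)
qed


lemma (in cring) minus_zero_imp_eq:
  assumes "a \<in> carrier R" "b \<in> carrier R" "a \<ominus> b = \<zero>" shows "a = b"
proof -
  have "a = (a \<ominus> b) \<oplus> b" by (rule idI15) (use assms in auto)
  also have "\<dots> = \<zero> \<oplus> b" unfolding assms(3) ..
  also have "\<dots> = b" using assms by simp
  finally show ?thesis .
qed

context field begin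
context fixes F assumes subF: "subfield F R" and dim: "dimension 2 F (carrier R)" begin

lemma F_sub: "F \<subseteq> carrier R" using subfieldE(3)[OF subF] .

lemma Fc: "x \<in> F \<Longrightarrow> x \<in> carrier R" using F_sub by blast

lemma F_zero: "\<zero> \<in> F" and F_one: "\<one> \<in> F"
  and F_neg: "x \<in> F \<Longrightarrow> \<ominus> x \<in> F"
  and F_mult: "x \<in> F \<Longrightarrow> y \<in> F \<Longrightarrow> x \<otimes> y \<in> F"
  and F_add: "x \<in> F \<Longrightarrow> y \<in> F \<Longrightarrow> x \<oplus> y \<in> F"
  using subringE[OF subfieldE(1)[OF subF]] by auto

lemma F_minus: "x \<in> F \<Longrightarrow> y \<in> F \<Longrightarrow> x \<ominus> y \<in> F"
  by (simp add: minus_eq F_add F_neg)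

lemma F_inv: "x \<in> F \<Longrightarrow> x \<noteq> \<zero> \<Longrightarrow> inv x \<in> F"
  using subfield_m_inv(1)[OF subF] by auto

lemma span1_mem: "v \<in> carrier R \<Longrightarrow> w \<in> Span F [v] \<longleftrightarrow> (\<exists>y\<in>F. w = y \<otimes> v)"
  using Fc by (auto simp: line_extension_mem_iff)

lemma span2_mem: "u \<in> carrier R \<Longrightarrow> v \<in> carrier R \<Longrightarrow>
   w \<in> Span F [u, v] \<longleftrightarrow> (\<exists>x\<in>F. \<exists>y\<in>F. w = x \<otimes> u \<oplus> y \<otimes> v)"
proof -
  assume uv: "u \<in> carrier R" "v \<in> carrier R"
  have L: "z \<in> line_extension F v {\<zero>} \<longleftrightarrow> (\<exists>y\<in>F. z = y \<otimes> v)" for z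
    using Fc uv by (auto simp: line_extension_mem_iff)
  have S: "Span F [u, v] = line_extension F u (line_extension F v {\<zero>})" by simp
  show ?thesis
  proof
    assume "w \<in> Span F [u, v]"
    then have "w \<in> line_extension F u (line_extension F v {\<zero>})" by simp
    then have "\<exists>x\<in>F. \<exists>z\<in>line_extension F v {\<zero>}. w = x \<otimes> u \<oplus> z"
      by (rule iffD1[OF line_extension_mem_iff])
    then obtain x z where xz: "x \<in> F" "z \<in> line_extension F v {\<zero>}" "w = x \<otimes> u \<oplus> z"
      by blast
    then obtain y where "y \<in> F" "z = y \<otimes> v" using L by blast
    then show "\<exists>x\<in>F. \<exists>y\<in>F. w = x \<otimes> u \<oplus> y \<otimes> v" using xz by blast
  next
    assume "\<exists>x\<in>F. \<exists>y\<in>F. w = x \<otimes> u \<oplus> y \<otimes> v"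
    then obtain x y where xy: "x \<in> F" "y \<in> F" "w = x \<otimes> u \<oplus> y \<otimes> v" by blast
    have "y \<otimes> v \<in> line_extension F v {\<zero>}" using L xy by blast
    then have "w \<in> line_extension F u (line_extension F v {\<zero>})"
    proof -
      have "\<exists>k\<in>F. \<exists>z\<in>line_extension F v {\<zero>}. w = k \<otimes> u \<oplus> z"
        using xy(1,3) \<open>y \<otimes> v \<in> line_extension F v {\<zero>}\<close> by blast
      then show ?thesis by (rule iffD2[OF line_extension_mem_iff])
    qed
    then show "w \<in> Span F [u, v]" by simp
  qed
qed

lemma carrier_ne_F: "carrier R \<noteq> F"
proof
  assume "carrier R = F"
  then have "dimension 1 F (carrier R)" using dimension_one[OF subF] by simp
  from dimension_is_inj[OF subF dim this] show False by simp
qed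

lemma exists_nonF: "\<exists>\<beta> \<in> carrier R. \<beta> \<notin> F"
  using carrier_ne_F F_sub by blast

lemma basis1:
  assumes b: "\<beta> \<in> carrier R" "\<beta> \<notin> F"
  shows "independent F [\<one>, \<beta>]" "Span F [\<one>, \<beta>] = carrier R"
proof -
  have b0: "\<beta> \<noteq> \<zero>" using b F_zero by auto
  have "\<one> \<notin> Span F [\<beta>]"
  proof
    assume "\<one> \<in> Span F [\<beta>]"
    then obtain k where k: "k \<in> F" "\<one> = k \<otimes> \<beta>" using span1_mem b by blast
    have k0: "k \<noteq> \<zero>" using k b by auto
    have kc: "k \<in> carrier R" "inv k \<in> carrier R" using Fc k F_inv[OF k(1) k0] by auto
    have ik: "inv k \<otimes> k = \<one>" by (rule subfield_m_inv(3)[OF subF]) (use k(1) k0 in auto)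
    have "\<beta> = (inv k \<otimes> k) \<otimes> \<beta>" unfolding ik using b by simp
    also have "\<dots> = inv k \<otimes> (k \<otimes> \<beta>)" using kc b by (simp add: m_assoc)
    also have "\<dots> = inv k" using k(2)[symmetric] kc by simp
    finally have "inv k = \<beta>" by simp
    then show False using F_inv[OF k(1) k0] b by simp
  qed
  moreover have "independent F [\<beta>]"
    using b0 b by (auto intro!: li_Cons)
  ultimately show ind: "independent F [\<one>, \<beta>]" by (auto intro!: li_Cons)
  show "Span F [\<one>, \<beta>] = carrier R"
    using independent_length_eq_dimension[OF subF dim ind] b by simp
qed

lemma decomp:
  assumes "\<beta> \<in> carrier R" "\<beta> \<notin> F" "w \<in> carrier R"
  shows "\<exists>x\<in>F. \<exists>y\<in>F. w = x \<oplus> y \<otimes> \<beta>"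
proof -
  have "w \<in> Span F [\<one>, \<beta>]" using basis1[OF assms(1,2)] assms(3) by simp
  then show ?thesis using span2_mem[of \<one> \<beta> w] assms Fc by auto
qed

lemma gen_full:
  assumes "\<beta> \<in> carrier R" "\<beta> \<notin> F" "r2 \<in> carrier R"
  shows "generate_field R (F \<union> {\<beta>, r2}) = carrier R"
proof
  have H: "F \<union> {\<beta>, r2} \<subseteq> carrier R" using F_sub assms by auto
  show "generate_field R (F \<union> {\<beta>, r2}) \<subseteq> carrier R" using generate_field_incl[OF H] .
  show "carrier R \<subseteq> generate_field R (F \<union> {\<beta>, r2})"
  proof
    fix w assume "w \<in> carrier R"
    then obtain x y where xy: "x \<in> F" "y \<in> F" "w = x \<oplus> y \<otimes> \<beta>" using decomp assms by blast
    have gx: "x \<in> generate_field R (F \<union> {\<beta>, r2})" using xy by (auto intro: generate_field.incl)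
    have gy: "y \<in> generate_field R (F \<union> {\<beta>, r2})" using xy by (auto intro: generate_field.incl)
    have gb: "\<beta> \<in> generate_field R (F \<union> {\<beta>, r2})" by (auto intro: generate_field.incl)
    show "w \<in> generate_field R (F \<union> {\<beta>, r2})"
      unfolding xy(3) by (intro generate_field.eng_add generate_field.eng_mult gx gy gb)
  qed
qed

lemma gen_F:
  assumes "r1 \<in> F" "r2 \<in> F"
  shows "generate_field R (F \<union> {r1, r2}) = F"
proof -
  have e: "F \<union> {r1, r2} = F" using assms by auto
  show ?thesis unfolding e
    using generate_field_min_subfield1[OF F_sub subF] generate_field.incl[of _ F R] by blast
qed

lemma root_in_F:
  assumes "a \<in> F" "b \<in> F" "d \<in> F" "r1 \<in> carrier R" "r2 \<in> carrier R"
    and s: "r1 \<oplus> r2 = a \<oplus> d" and t: "r1 \<otimes> r2 = a \<otimes> d \<ominus> b \<otimes> \<zero>"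
  shows "r1 \<in> F"
proof -
  have c: "a \<in> carrier R" "b \<in> carrier R" "d \<in> carrier R" using assms Fc by auto
  have t': "r1 \<otimes> r2 = a \<otimes> d" using t c by (simp add: minus_eq)
  have "(r1 \<ominus> a) \<otimes> (r1 \<ominus> d) = r1 \<otimes> r1 \<ominus> (a \<oplus> d) \<otimes> r1 \<oplus> a \<otimes> d"
    by (rule idI1) (use c assms in auto)
  also have "\<dots> = r1 \<otimes> r1 \<ominus> (r1 \<oplus> r2) \<otimes> r1 \<oplus> r1 \<otimes> r2" by (simp only: s t')
  also have "\<dots> = \<zero>" by (rule idI2[OF assms(4,5)])
  finally have "r1 \<ominus> a = \<zero> \<or> r1 \<ominus> d = \<zero>" using integral_iff c assms by simp
  then have "r1 = a \<or> r1 = d" using minus_zero_imp_eq c assms by blast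
  then show ?thesis using assms by auto
qed

lemma coord_unique:
  assumes ind: "independent F [u, v]" and "x \<in> F" "y \<in> F" "x' \<in> F" "y' \<in> F"
    and eq: "x \<otimes> u \<oplus> y \<otimes> v = x' \<otimes> u \<oplus> y' \<otimes> v"
  shows "x = x' \<and> y = y'"
proof -
  have uv: "u \<in> carrier R" "v \<in> carrier R" using independent_in_carrier[OF ind] by auto
  have c1: "combine [x, y] [u, v] = x \<otimes> u \<oplus> y \<otimes> v" using uv assms Fc by simp
  have c2: "combine [x', y'] [u, v] = x \<otimes> u \<oplus> y \<otimes> v" using uv assms Fc eq by simp
  have mem: "x \<otimes> u \<oplus> y \<otimes> v \<in> Span F [u, v]" using span2_mem uv assms by blast
  from unique_decomposition[OF subF ind mem] obtain Ks where
    "\<And>Ks'. set Ks' \<subseteq> F \<and> length Ks' = length [u, v] \<and> x \<otimes> u \<oplus> y \<otimes> v = combine Ks' [u, v] \<Longrightarrow> Ks' = Ks"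
    by (metis (no_types, lifting))
  then have "[x, y] = Ks" "[x', y'] = Ks" using c1 c2 assms by auto
  then show ?thesis by (metis list.inject)
qed

lemma indep_u_nonzero:
  assumes "independent F [u, v]" shows "u \<noteq> \<zero>"
proof
  assume u0: "u = \<zero>"
  have vc: "v \<in> carrier R" using independent_in_carrier[OF assms] by auto
  from assms have "u \<notin> Span F [v]" by (cases rule: independent.cases) auto
  moreover have "u \<in> Span F [v]"
  proof -
    have "u = \<zero> \<otimes> v" using u0 vc by simp
    then show ?thesis using span1_mem[OF vc] F_zero by blast
  qed
  ultimately show False by blast
qed

lemma fwd:
  assumes nF: "n \<in> F" and ac0: "\<alpha> \<in> carrier R" and nrm: "is_norm_of R F \<alpha> n"
  shows "\<exists>M \<in> mat2_carrier F. \<exists>N \<in> mat2_carrier F.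
            n = \<ominus> mat2_det R (mat2_commutator R M N) \<and> splits_char_poly R F M"
proof -
  from nrm obtain u v a b c d where
    uv: "u \<in> carrier R" "v \<in> carrier R" and ind: "independent F [u, v]"
    and abcd: "a \<in> F" "b \<in> F" "c \<in> F" "d \<in> F"
    and eu: "\<alpha> \<otimes> u = a \<otimes> u \<oplus> c \<otimes> v" and ev: "\<alpha> \<otimes> v = b \<otimes> u \<oplus> d \<otimes> v"
    and nd: "n = a \<otimes> d \<ominus> b \<otimes> c"
    unfolding is_norm_of_def by blast
  have ac: "a \<in> carrier R" "b \<in> carrier R" "c \<in> carrier R" "d \<in> carrier R" using abcd Fc by auto
  show ?thesis
  proof (cases "\<alpha> \<in> F")
    case False
    have u0: "u \<noteq> \<zero>" by (rule indep_u_nonzero[OF ind])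
    define s where "s = a \<oplus> d"
    define t where "t = a \<otimes> d \<ominus> b \<otimes> c"
    have st: "s \<in> carrier R" "t \<in> carrier R" using ac by (auto simp: s_def t_def)
    have X0: "\<alpha> \<otimes> \<alpha> \<ominus> s \<otimes> \<alpha> \<oplus> t = \<zero>"
    proof -
      have "(\<alpha> \<otimes> \<alpha> \<ominus> s \<otimes> \<alpha> \<oplus> t) \<otimes> u = \<alpha> \<otimes> (\<alpha> \<otimes> u) \<ominus> s \<otimes> (\<alpha> \<otimes> u) \<oplus> t \<otimes> u"
        by (rule idI8) (use ac0 st uv in auto)
      also have "\<dots> = \<alpha> \<otimes> (a \<otimes> u \<oplus> c \<otimes> v) \<ominus> s \<otimes> (a \<otimes> u \<oplus> c \<otimes> v) \<oplus> t \<otimes> u"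
        by (simp only: eu)
      also have "\<dots> = (a \<otimes> (\<alpha> \<otimes> u) \<oplus> c \<otimes> (\<alpha> \<otimes> v)) \<ominus> s \<otimes> (a \<otimes> u \<oplus> c \<otimes> v) \<oplus> t \<otimes> u"
        by (simp only: idI9[OF ac0 ac(1) ac(3) uv])
      also have "\<dots> = a \<otimes> (a \<otimes> u \<oplus> c \<otimes> v) \<oplus> c \<otimes> (b \<otimes> u \<oplus> d \<otimes> v) \<ominus> (a \<oplus> d) \<otimes> (a \<otimes> u \<oplus> c \<otimes> v) \<oplus> (a \<otimes> d \<ominus> b \<otimes> c) \<otimes> u"
        by (simp only: eu ev s_def t_def)
      also have "\<dots> = \<zero>" by (rule idI10) (use ac uv in auto)
      finally have "(\<alpha> \<otimes> \<alpha> \<ominus> s \<otimes> \<alpha> \<oplus> t) \<otimes> u = \<zero>" .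
      then show ?thesis using integral_iff[of "\<alpha> \<otimes> \<alpha> \<ominus> s \<otimes> \<alpha> \<oplus> t" u] u0 ac0 st uv by auto
    qed
    have r2c: "s \<ominus> \<alpha> \<in> carrier R" using st ac0 by auto
    have prod: "\<alpha> \<otimes> (s \<ominus> \<alpha>) = t"
    proof -
      have "\<alpha> \<otimes> (s \<ominus> \<alpha>) = t \<ominus> (\<alpha> \<otimes> \<alpha> \<ominus> s \<otimes> \<alpha> \<oplus> t)" by (rule idI11) (use ac0 st in auto)
      also have "\<dots> = t \<ominus> \<zero>" by (simp only: X0)
      also have "\<dots> = t" using st by (simp add: minus_eq)
      finally show ?thesis .
    qed
    have sum: "\<alpha> \<oplus> (s \<ominus> \<alpha>) = s" by (rule idI11b) (use ac0 st in auto)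
    have c0: "c \<noteq> \<zero>"
    proof
      assume "c = \<zero>"
      then have "\<alpha> \<otimes> (s \<ominus> \<alpha>) = a \<otimes> d \<ominus> b \<otimes> \<zero>" using prod t_def by simp
      then have "\<alpha> \<in> F" using root_in_F[OF abcd(1,2,4) ac0 r2c] sum s_def by simp
      then show False using False by simp
    qed
    have invc: "inv c \<in> F" using F_inv[OF abcd(3) c0] .
    define f where "f = d \<otimes> inv c"
    have fF: "f \<in> F" unfolding f_def using F_mult[OF abcd(4) invc] .
    have fc: "f \<otimes> c = d"
    proof -
      have ic: "inv c \<otimes> c = \<one>" by (rule subfield_m_inv(3)[OF subF]) (use abcd(3) c0 in auto)
      have "f \<otimes> c = d \<otimes> (inv c \<otimes> c)" unfolding f_def using ac Fc[OF invc] by (simp add: m_assoc)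
      then show ?thesis using ic ac by simp
    qed
    have fcar: "f \<in> carrier R" using Fc fF by auto
    show ?thesis
    proof (intro bexI conjI)
      have "\<ominus> mat2_det R (mat2_commutator R (a, b, c, d) (\<one>, f, \<zero>, \<zero>)) = (a \<otimes> d \<ominus> b \<otimes> c) \<oplus> (f \<otimes> c \<ominus> d) \<otimes> (f \<otimes> c \<oplus> a)"
        unfolding mat2_det_def mat2_commutator_def mat2_minus_def mat2_mult_def prod.case
        by (rule idI12) (use ac fcar in auto)
      also have "\<dots> = a \<otimes> d \<ominus> b \<otimes> c" unfolding fc using ac by (simp add: minus_eq r_neg)
      finally show "n = \<ominus> mat2_det R (mat2_commutator R (a, b, c, d) (\<one>, f, \<zero>, \<zero>))" using nd by simp
      show "splits_char_poly R F (a, b, c, d)"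
        unfolding splits_char_poly_def is_splitting_field_quad_def mat2_trace_def mat2_det_def prod.case
      proof (intro bexI conjI)
        show "\<alpha> \<oplus> (s \<ominus> \<alpha>) = a \<oplus> d" using sum s_def by simp
        show "\<alpha> \<otimes> (s \<ominus> \<alpha>) = a \<otimes> d \<ominus> b \<otimes> c" using prod t_def by simp
        show "generate_field R (F \<union> {\<alpha>, s \<ominus> \<alpha>}) = carrier R" by (rule gen_full[OF ac0 False r2c])
      qed (use ac0 r2c in auto)
      show "(a, b, c, d) \<in> mat2_carrier F" using abcd by (simp add: mat2_carrier_def)
      show "(\<one>, f, \<zero>, \<zero>) \<in> mat2_carrier F" using fF F_one F_zero by (simp add: mat2_carrier_def)
    qed
  next
    case True
    have "a \<otimes> u \<oplus> c \<otimes> v = \<alpha> \<otimes> u \<oplus> \<zero> \<otimes> v" using eu uv ac0 ac by simp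
    then have ac1: "a = \<alpha> \<and> c = \<zero>" using coord_unique[OF ind abcd(1,3) True F_zero] by blast
    have "b \<otimes> u \<oplus> d \<otimes> v = \<zero> \<otimes> u \<oplus> \<alpha> \<otimes> v" using ev uv ac0 ac by simp
    then have bd1: "b = \<zero> \<and> d = \<alpha>" using coord_unique[OF ind abcd(2,4) F_zero True] by blast
    have nn: "n = \<alpha> \<otimes> \<alpha>" using nd ac1 bd1 ac0 by (simp add: minus_eq)
    obtain \<beta> where bc: "\<beta> \<in> carrier R" and bF: "\<beta> \<notin> F" using exists_nonF by blast
    obtain x y where xy: "x \<in> F" "y \<in> F" and bb: "\<beta> \<otimes> \<beta> = x \<oplus> y \<otimes> \<beta>"
      using decomp[OF bc bF, of "\<beta> \<otimes> \<beta>"] bc by blast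
    have xyc: "x \<in> carrier R" "y \<in> carrier R" using xy Fc by auto
    have r2c: "y \<ominus> \<beta> \<in> carrier R" using xyc bc by auto
    show ?thesis
    proof (intro bexI conjI)
      have "\<ominus> mat2_det R (mat2_commutator R (\<zero>, x, \<one>, y) (\<zero>, \<alpha>, \<zero>, \<zero>)) = \<alpha> \<otimes> \<alpha>"
        unfolding mat2_det_def mat2_commutator_def mat2_minus_def mat2_mult_def prod.case
        by (rule idI14) (use xyc ac0 in auto)
      then show "n = \<ominus> mat2_det R (mat2_commutator R (\<zero>, x, \<one>, y) (\<zero>, \<alpha>, \<zero>, \<zero>))" using nn by simp
      show "splits_char_poly R F (\<zero>, x, \<one>, y)"
        unfolding splits_char_poly_def is_splitting_field_quad_def mat2_trace_def mat2_det_def prod.case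
      proof (intro bexI conjI)
        show "\<beta> \<oplus> (y \<ominus> \<beta>) = \<zero> \<oplus> y"
        proof -
          have "\<beta> \<oplus> (y \<ominus> \<beta>) = y" by (rule idI11b) (use bc xyc in auto)
          then show ?thesis using xyc by simp
        qed
        show "\<beta> \<otimes> (y \<ominus> \<beta>) = \<zero> \<otimes> y \<ominus> x \<otimes> \<one>"
        proof -
          have "\<beta> \<otimes> (y \<ominus> \<beta>) = \<ominus> x \<ominus> (\<beta> \<otimes> \<beta> \<ominus> (x \<oplus> y \<otimes> \<beta>))" by (rule idI13) (use bc xyc in auto)
          also have "\<dots> = \<ominus> x \<ominus> ((x \<oplus> y \<otimes> \<beta>) \<ominus> (x \<oplus> y \<otimes> \<beta>))" by (simp only: bb)
          also have "\<dots> = \<ominus> x" using xyc bc by (simp add: minus_eq r_neg)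
          also have "\<dots> = \<zero> \<otimes> y \<ominus> x \<otimes> \<one>" using xyc by (simp add: minus_eq)
          finally show ?thesis .
        qed
        show "generate_field R (F \<union> {\<beta>, y \<ominus> \<beta>}) = carrier R" by (rule gen_full[OF bc bF r2c])
      qed (use bc r2c in auto)
      show "(\<zero>, x, \<one>, y) \<in> mat2_carrier F" using xy F_one F_zero by (simp add: mat2_carrier_def)
      show "(\<zero>, \<alpha>, \<zero>, \<zero>) \<in> mat2_carrier F" using True F_zero by (simp add: mat2_carrier_def)
    qed
  qed
qed

lemma bwd:
  assumes MF: "M \<in> mat2_carrier F" and NF: "N \<in> mat2_carrier F" and sp: "splits_char_poly R F M"
  shows "\<exists>\<alpha> \<in> carrier R. is_norm_of R F \<alpha> (\<ominus> mat2_det R (mat2_commutator R M N))"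
proof -
  obtain a b c d where M: "M = (a, b, c, d)" by (cases M) auto
  obtain e f g h where N: "N = (e, f, g, h)" by (cases N) auto
  have abcd: "a \<in> F" "b \<in> F" "c \<in> F" "d \<in> F" using MF M by (auto simp: mat2_carrier_def)
  have efgh: "e \<in> F" "f \<in> F" "g \<in> F" "h \<in> F" using NF N by (auto simp: mat2_carrier_def)
  have ac: "a \<in> carrier R" "b \<in> carrier R" "c \<in> carrier R" "d \<in> carrier R" using abcd Fc by auto
  have ec: "e \<in> carrier R" "f \<in> carrier R" "g \<in> carrier R" "h \<in> carrier R" using efgh Fc by auto
  from sp obtain r1 r2 where r: "r1 \<in> carrier R" "r2 \<in> carrier R"
    and sum: "r1 \<oplus> r2 = a \<oplus> d" and prod: "r1 \<otimes> r2 = a \<otimes> d \<ominus> b \<otimes> c"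
    and gen: "generate_field R (F \<union> {r1, r2}) = carrier R"
    unfolding splits_char_poly_def is_splitting_field_quad_def mat2_trace_def mat2_det_def M prod.case
    by blast
  have r1F: "r1 \<notin> F"
  proof
    assume r1F: "r1 \<in> F"
    have "r2 = (r1 \<oplus> r2) \<ominus> r1" by (rule idI3) (use r in auto)
    also have "\<dots> = (a \<oplus> d) \<ominus> r1" by (simp only: sum)
    finally have "r2 \<in> F" using F_minus F_add abcd r1F by simp
    then have "generate_field R (F \<union> {r1, r2}) = F" using gen_F r1F by blast
    then show False using gen carrier_ne_F by simp
  qed
  have c0: "c \<noteq> \<zero>"
  proof
    assume "c = \<zero>"
    then have "r1 \<otimes> r2 = a \<otimes> d \<ominus> b \<otimes> \<zero>" using prod by simp
    then have "r1 \<in> F" using root_in_F[OF abcd(1,2,4) r sum] by simp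
    then show False using r1F by simp
  qed
  define s where "s = a \<oplus> d"
  define t where "t = a \<otimes> d \<ominus> b \<otimes> c"
  define p where "p = b \<otimes> g \<ominus> c \<otimes> f"
  define rr where "rr = c \<otimes> (e \<ominus> h) \<oplus> g \<otimes> (d \<ominus> a)"
  define \<mu> where "\<mu> = rr \<otimes> inv c"
  define la where "la = \<ominus> p \<ominus> \<mu> \<otimes> d"
  have invc: "inv c \<in> F" using F_inv[OF abcd(3) c0] .
  have sF: "s \<in> F" "t \<in> F" "p \<in> F" "rr \<in> F"
    unfolding s_def t_def p_def rr_def using abcd efgh
    by (auto intro!: F_add F_mult F_minus)
  have muF: "\<mu> \<in> F" unfolding \<mu>_def using F_mult[OF sF(4) invc] .
  have laF: "la \<in> F" unfolding la_def using muF sF abcd by (auto intro!: F_minus F_neg F_mult)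
  have sc: "s \<in> carrier R" "t \<in> carrier R" "p \<in> carrier R" "rr \<in> carrier R" "\<mu> \<in> carrier R" "la \<in> carrier R"
    using sF muF laF Fc by auto
  have muc: "\<mu> \<otimes> c = rr"
  proof -
    have ic: "inv c \<otimes> c = \<one>" by (rule subfield_m_inv(3)[OF subF]) (use abcd(3) c0 in auto)
    have "\<mu> \<otimes> c = rr \<otimes> (inv c \<otimes> c)" unfolding \<mu>_def using ac sc Fc[OF invc] by (simp add: m_assoc)
    then show ?thesis using ic sc by simp
  qed
  have R2: "r1 \<otimes> r1 \<ominus> s \<otimes> r1 \<oplus> t = \<zero>"
  proof -
    have "r1 \<otimes> r1 \<ominus> s \<otimes> r1 \<oplus> t = r1 \<otimes> r1 \<ominus> (r1 \<oplus> r2) \<otimes> r1 \<oplus> r1 \<otimes> r2"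
      by (simp only: s_def t_def sum prod)
    also have "\<dots> = \<zero>" by (rule idI2[OF r])
    finally show ?thesis .
  qed
  define \<alpha> where "\<alpha> = la \<oplus> \<mu> \<otimes> r1"
  have alc: "\<alpha> \<in> carrier R" unfolding \<alpha>_def using sc r by auto
  have e1: "\<alpha> \<otimes> \<one> = la \<otimes> \<one> \<oplus> \<mu> \<otimes> r1" using alc sc unfolding \<alpha>_def by simp
  have e2: "\<alpha> \<otimes> r1 = (\<ominus> (\<mu> \<otimes> t)) \<otimes> \<one> \<oplus> (la \<oplus> \<mu> \<otimes> s) \<otimes> r1"
  proof (rule minus_zero_imp_eq)
    have "\<alpha> \<otimes> r1 \<ominus> ((\<ominus> (\<mu> \<otimes> t)) \<otimes> \<one> \<oplus> (la \<oplus> \<mu> \<otimes> s) \<otimes> r1) = \<mu> \<otimes> (r1 \<otimes> r1 \<ominus> s \<otimes> r1 \<oplus> t)"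
      unfolding \<alpha>_def by (rule idI4) (use sc r in auto)
    also have "\<dots> = \<zero>" unfolding R2 using sc by simp
    finally show "\<alpha> \<otimes> r1 \<ominus> ((\<ominus> (\<mu> \<otimes> t)) \<otimes> \<one> \<oplus> (la \<oplus> \<mu> \<otimes> s) \<otimes> r1) = \<zero>" .
  qed (use alc r sc in auto)
  have nn: "\<ominus> mat2_det R (mat2_commutator R M N) = la \<otimes> (la \<oplus> \<mu> \<otimes> s) \<ominus> (\<ominus> (\<mu> \<otimes> t)) \<otimes> \<mu>"
  proof -
    have lac: "la \<otimes> c = \<ominus> (p \<otimes> c) \<ominus> (\<mu> \<otimes> c) \<otimes> d"
      unfolding la_def by (rule idI6) (use sc ac in auto)
    have "(la \<otimes> (la \<oplus> \<mu> \<otimes> s) \<ominus> (\<ominus> (\<mu> \<otimes> t)) \<otimes> \<mu>) \<otimes> (c \<otimes> c)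
        = (la \<otimes> c) \<otimes> ((la \<otimes> c) \<oplus> (\<mu> \<otimes> c) \<otimes> s) \<oplus> (\<mu> \<otimes> c) \<otimes> (\<mu> \<otimes> c) \<otimes> t"
      by (rule idI5) (use sc ac in auto)
    also have "\<dots> = (\<ominus> (p \<otimes> c) \<ominus> rr \<otimes> d) \<otimes> ((\<ominus> (p \<otimes> c) \<ominus> rr \<otimes> d) \<oplus> rr \<otimes> s) \<oplus> rr \<otimes> rr \<otimes> t"
      by (simp only: lac muc)
    also have "\<dots> = (\<ominus> mat2_det R (mat2_commutator R M N)) \<otimes> (c \<otimes> c)"
      unfolding p_def rr_def s_def t_def M N mat2_det_def mat2_commutator_def mat2_minus_def mat2_mult_def prod.case
      by (rule idI7) (use ac ec in auto)
    finally have eq: "(la \<otimes> (la \<oplus> \<mu> \<otimes> s) \<ominus> (\<ominus> (\<mu> \<otimes> t)) \<otimes> \<mu>) \<otimes> (c \<otimes> c)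
        = (\<ominus> mat2_det R (mat2_commutator R M N)) \<otimes> (c \<otimes> c)" .
    have cc: "c \<otimes> c \<noteq> \<zero>" using c0 ac integral_iff by auto
    have dc: "\<ominus> mat2_det R (mat2_commutator R M N) \<in> carrier R"
      unfolding M N mat2_det_def mat2_commutator_def mat2_minus_def mat2_mult_def prod.case
      using ac ec by auto
    show ?thesis using eq m_rcancel[OF cc _ _] dc sc ac by auto
  qed
  have bas: "independent F [\<one>, r1]" "Span F [\<one>, r1] = carrier R"
    using basis1[OF r(1) r1F] by auto
  show ?thesis
    unfolding is_norm_of_def
  proof (intro bexI exI conjI)
    show "\<alpha> \<otimes> \<one> = la \<otimes> \<one> \<oplus> \<mu> \<otimes> r1" by (rule e1)
    show "\<alpha> \<otimes> r1 = (\<ominus> (\<mu> \<otimes> t)) \<otimes> \<one> \<oplus> (la \<oplus> \<mu> \<otimes> s) \<otimes> r1" by (rule e2)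
    show "\<ominus> mat2_det R (mat2_commutator R M N) = la \<otimes> (la \<oplus> \<mu> \<otimes> s) \<ominus> (\<ominus> (\<mu> \<otimes> t)) \<otimes> \<mu>" by (rule nn)
  qed (use bas alc r laF muF sF in \<open>auto intro: F_neg F_mult F_add\<close>)
qed

end
end

theorem theorem5p1:
  fixes K :: "('a, 'b) ring_scheme" and F :: "'a set" and n :: 'a
  assumes "quadratic_extension K F"
    and "n \<in> F"
  shows "(\<exists>\<alpha> \<in> carrier K. is_norm_of K F \<alpha> n) \<longleftrightarrow>
         (\<exists>M \<in> mat2_carrier F. \<exists>N \<in> mat2_carrier F.
            n = \<ominus>\<^bsub>K\<^esub> mat2_det K (mat2_commutator K M N) \<and> splits_char_poly K F M)"
proof -
  have fK: "field K" and subF: "subfield F K" and dim: "ring.dimension K 2 F (carrier K)"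
    using assms(1) unfolding quadratic_extension_def by auto
  interpret field K by (rule fK)
  show ?thesis
  proof
    assume "\<exists>\<alpha> \<in> carrier K. is_norm_of K F \<alpha> n"
    then obtain \<alpha> where "\<alpha> \<in> carrier K" "is_norm_of K F \<alpha> n" by blast
    then show "\<exists>M \<in> mat2_carrier F. \<exists>N \<in> mat2_carrier F.
            n = \<ominus>\<^bsub>K\<^esub> mat2_det K (mat2_commutator K M N) \<and> splits_char_poly K F M"
      using fwd[OF subF dim assms(2)] by blast
  next
    assume "\<exists>M \<in> mat2_carrier F. \<exists>N \<in> mat2_carrier F.
            n = \<ominus>\<^bsub>K\<^esub> mat2_det K (mat2_commutator K M N) \<and> splits_char_poly K F M"
    then obtain M N where "M \<in> mat2_carrier F" "N \<in> mat2_carrier F"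
      "n = \<ominus>\<^bsub>K\<^esub> mat2_det K (mat2_commutator K M N)" "splits_char_poly K F M" by blast
    then show "\<exists>\<alpha> \<in> carrier K. is_norm_of K F \<alpha> n"
      using bwd[OF subF dim] by blast
  qed
qed

end
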